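(* Let $n,m\ge 0$ and let $\lambda$ be a partition with $n+m$ parts. Then $$G_{\lambda}(z_1,\dots,z_n,w_1,\dots,w_m;\beta)=\sum_{\nu}G_{\lambda/\nu}(z_1,\dots,z_n;\beta)\,G_\nu(w_1,\dots,w_m;\beta),$$ the sum running over all partitions $\nu$ with $m$ parts. At $\beta=0$ this reduces to the corresponding identity for Schur and skew Schur polynomials.
   Context: A "partition with $N$ parts" means a weakly decreasing sequence of $N$ nonnegative integers (zeros allowed); $|\lambda|=\sum_j\lambda_j$. The Grothendieck polynomial is $G_\lambda(z_1,\dots,z_N;\beta)=\det_{1\le j,k\le N}\big(z_j^{\lambda_k+N-k}(1+\beta z_j)^{k-1}\big)/\prod_{1\le j<k\le N}(z_j-z_k)$ ($=1$ for $N=0$). For $\mu$ with $k+1$ parts and $\lambda$ with $k$ parts, $\mu\succ\lambda$ iff $\mu_j\ge\lambda_j\ge\mu_{j+1}$ ($1\le j\le k$). Single-variable skew Grothendieck polynomial: $G_{\mu/\lambda}(z;\beta)=z^{|\mu|-|\lambda|}\prod_{j=1}^k(1+\beta z-\beta z\,\delta_{\mu_{j+1},\lambda_j})$ if $\mu\succ\lambda$, and $0$ otherwise. Multivariable skew Grothendieck polynomial: for $\lambda$ with $n+m$ parts and $\nu$ with $m$ parts, $$G_{\lambda/\nu}(z_1,\dots,z_n;\beta)=\sum_{\lambda^{(1)},\dots,\lambda^{(n-1)}}\prod_{j=1}^nG_{\lambda^{(j-1)}/\lambda^{(j)}}(z_j;\beta),$$ where $\lambda^{(0)}=\lambda$,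 $\lambda^{(n)}=\nu$, and $\lambda^{(j)}$ ranges over partitions with $n+m-j$ parts (the nonzero terms are those with $\lambda^{(0)}\succ\lambda^{(1)}\succ\cdots\succ\lambda^{(n)}$). *)

theory Defs
  imports Main "Jordan_Normal_Form.Determinant"
begin

definition is_partition :: "nat \<Rightarrow> nat list \<Rightarrow> bool" where
  "is_partition N l \<longleftrightarrow> length l = N \<and> sorted_wrt (\<ge>) l"

definition bounded_partitions :: "nat \<Rightarrow> nat \<Rightarrow> nat list set" where
  "bounded_partitions N b = {l. is_partition N l \<and> (\<forall>x\<in>set l. x \<le> b)}"

text \<open>Grothendieck polynomial evaluated at the points zs (bialternant formula).\<close>
definition groth :: "'a::field \<Rightarrow> nat list \<Rightarrow> 'a list \<Rightarrow> 'a" where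
  "groth \<beta> lam zs =
     (let N = length zs in
      det (mat N N (\<lambda>(j,k). (zs!j) ^ (lam!k + N - 1 - k) * (1 + \<beta> * zs!j) ^ k))
      / (\<Prod>j<N. \<Prod>k\<in>{j<..<N}. (zs!j - zs!k)))"

definition interlaces :: "nat list \<Rightarrow> nat list \<Rightarrow> bool" where
  "interlaces mu lam \<longleftrightarrow> length mu = length lam + 1 \<and>
     (\<forall>j<length lam. mu!j \<ge> lam!j \<and> lam!j \<ge> mu!(j+1))"

definition skew1 :: "'a::field \<Rightarrow> nat list \<Rightarrow> nat list \<Rightarrow> 'a \<Rightarrow> 'a" where
  "skew1 \<beta> mu lam z =
     (if interlaces mu lam then
        z ^ (sum_list mu - sum_list lam) *
        (\<Prod>j<length lam. 1 + \<beta> * z - (if mu!(j+1) = lam!j then \<beta> * z else 0))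
      else 0)"

text \<open>The intermediate partition ranges over
  partitions with one part fewer; those with a part exceeding sum_list lam give zero
  terms (they cannot interlace with lam), so the sum is restricted to a finite set.\<close>
fun skewG :: "'a::field \<Rightarrow> nat list \<Rightarrow> nat list \<Rightarrow> 'a list \<Rightarrow> 'a" where
  "skewG \<beta> lam nu [] = (if lam = nu then 1 else 0)"
| "skewG \<beta> lam nu (z # zs) =
     (\<Sum>kap \<in> bounded_partitions (length lam - 1) (sum_list lam).
        skew1 \<beta> lam kap z * skewG \<beta> kap nu zs)"

end

theory Submission
  imports Defs "HOL-Library.FuncSet"
begin


lemma det_multilin:
  fixes r :: "nat \<Rightarrow> 'a::comm_ring_1"
  assumes fin: "\<And>j. j < n \<Longrightarrow> finite (S j)"
  shows "det (mat n n (\<lambda>(i,j). r i * (\<Sum>s\<in>S j. a j s * g i j s))) =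
    prod r {0..<n} * (\<Sum>\<sigma> \<in> PiE {0..<n} S. prod (\<lambda>j. a j (\<sigma> j)) {0..<n} *
       det (mat n n (\<lambda>(i,j). g i j (\<sigma> j))))"
proof -
  let ?M = "mat n n (\<lambda>(i,j). r i * (\<Sum>s\<in>S j. a j s * g i j s))"
  let ?G = "\<lambda>\<sigma>. mat n n (\<lambda>(i,j). g i j (\<sigma> j))"
  have "det ?M = det (transpose_mat ?M)" by (rule det_transpose[symmetric]) auto
  also have "\<dots> = (\<Sum>p\<in>{p. p permutes {0..<n}}. signof p *
      (\<Prod>i=0..<n. r (p i) * (\<Sum>s\<in>S i. a i s * g (p i) i s)))"
    by (subst det_def'[of _ n]) (auto intro!: sum.cong prod.cong simp: permutes_in_image)
  also have "\<dots> = (\<Sum>p\<in>{p. p permutes {0..<n}}. signof p * prod r {0..<n} *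
      (\<Sum>\<sigma> \<in> PiE {0..<n} S. (\<Prod>i=0..<n. a i (\<sigma> i)) * (\<Prod>i=0..<n. g (p i) i (\<sigma> i))))"
  proof (intro sum.cong refl)
    fix p assume p: "p \<in> {p. p permutes {0..<n}}"
    have "(\<Prod>i=0..<n. r (p i) * (\<Sum>s\<in>S i. a i s * g (p i) i s))
       = (\<Prod>i=0..<n. r (p i)) * (\<Prod>i=0..<n. (\<Sum>s\<in>S i. a i s * g (p i) i s))"
      by (rule prod.distrib)
    also have "(\<Prod>i=0..<n. r (p i)) = prod r {0..<n}"
      using prod.permute[of p "{0..<n}" r] p by (simp add: comp_def)
    also have "(\<Prod>i=0..<n. (\<Sum>s\<in>S i. a i s * g (p i) i s)) =
       (\<Sum>\<sigma> \<in> PiE {0..<n} S. \<Prod>i=0..<n. a i (\<sigma> i) * g (p i) i (\<sigma> i))"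
      by (rule prod_sum_PiE) (auto intro: fin)
    finally show "signof p * (\<Prod>i=0..<n. r (p i) * (\<Sum>s\<in>S i. a i s * g (p i) i s)) =
      signof p * prod r {0..<n} *
      (\<Sum>\<sigma> \<in> PiE {0..<n} S. (\<Prod>i=0..<n. a i (\<sigma> i)) * (\<Prod>i=0..<n. g (p i) i (\<sigma> i)))"
      by (simp add: prod.distrib mult.assoc)
  qed
  also have "\<dots> = prod r {0..<n} * (\<Sum>\<sigma> \<in> PiE {0..<n} S. (\<Prod>i=0..<n. a i (\<sigma> i)) *
      (\<Sum>p\<in>{p. p permutes {0..<n}}. signof p * (\<Prod>i=0..<n. g (p i) i (\<sigma> i))))"
  proof -
    let ?P = "{p. p permutes {0..<n}}" and ?B = "PiE {0..<n} S"
    let ?a = "\<lambda>\<sigma>. \<Prod>i=0..<n. a i (\<sigma> i)" and ?b = "\<lambda>p \<sigma>. \<Prod>i=0..<n. g (p i) i (\<sigma> i)"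
    have "(\<Sum>p\<in>?P. signof p * prod r {0..<n} * (\<Sum>\<sigma>\<in>?B. ?a \<sigma> * ?b p \<sigma>)) =
        (\<Sum>p\<in>?P. \<Sum>\<sigma>\<in>?B. signof p * prod r {0..<n} * (?a \<sigma> * ?b p \<sigma>))"
      by (simp only: sum_distrib_left)
    also have "\<dots> = (\<Sum>\<sigma>\<in>?B. \<Sum>p\<in>?P. signof p * prod r {0..<n} * (?a \<sigma> * ?b p \<sigma>))"
      by (rule sum.swap)
    also have "\<dots> = (\<Sum>\<sigma>\<in>?B. prod r {0..<n} * (?a \<sigma> * (\<Sum>p\<in>?P. signof p * ?b p \<sigma>)))"
      by (intro sum.cong refl) (simp add: sum_distrib_left sum_distrib_right ac_simps)
    also have "\<dots> = prod r {0..<n} * (\<Sum>\<sigma>\<in>?B. ?a \<sigma> * (\<Sum>p\<in>?P. signof p * ?b p \<sigma>))"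
      by (simp only: sum_distrib_left)
    finally show ?thesis .
  qed
  also have "\<dots> = prod r {0..<n} * (\<Sum>\<sigma> \<in> PiE {0..<n} S. (\<Prod>i=0..<n. a i (\<sigma> i)) * det (?G \<sigma>))"
  proof -
    have "\<And>\<sigma>. det (?G \<sigma>) = det (transpose_mat (?G \<sigma>))" by (rule det_transpose[symmetric]) auto
    moreover have "\<And>\<sigma>. det (transpose_mat (?G \<sigma>)) = 
       (\<Sum>p\<in>{p. p permutes {0..<n}}. signof p * (\<Prod>i=0..<n. g (p i) i (\<sigma> i)))"
      by (subst det_def'[of _ n]) (auto intro!: sum.cong prod.cong simp: permutes_in_image)
    ultimately show ?thesis by simp
  qed
  finally show ?thesis .
qed

lemma det_rowscale:
  fixes r :: "nat \<Rightarrow> 'a::comm_ring_1"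
  shows "det (mat n n (\<lambda>(i,j). r i * f i j)) = prod r {0..<n} * det (mat n n (\<lambda>(i,j). f i j))"
proof -
  have "det (mat n n (\<lambda>(i,j). r i * f i j)) = (\<Sum>p\<in>{p. p permutes {0..<n}}. signof p *
      (\<Prod>i=0..<n. r i * f i (p i)))"
    by (subst det_def'[of _ n]) (auto intro!: sum.cong prod.cong simp: permutes_in_image)
  also have "\<dots> = (\<Sum>p\<in>{p. p permutes {0..<n}}. prod r {0..<n} * (signof p *
      (\<Prod>i=0..<n. f i (p i))))"
    by (intro sum.cong refl) (simp add: prod.distrib ac_simps)
  also have "\<dots> = prod r {0..<n} * (\<Sum>p\<in>{p. p permutes {0..<n}}. signof p *
      (\<Prod>i=0..<n. f i (p i)))"
    by (simp only: sum_distrib_left)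
  also have "(\<Sum>p\<in>{p. p permutes {0..<n}}. signof p * (\<Prod>i=0..<n. f i (p i))) = det (mat n n (\<lambda>(i,j). f i j))"
    by (subst det_def'[of _ n]) (auto intro!: sum.cong prod.cong simp: permutes_in_image)
  finally show ?thesis .
qed

lemma key_identity:
  fixes w z \<beta> :: "'a::comm_ring_1"
  assumes d: "d > 0"
  shows "(1+\<beta>*z)*w^d - z^d*(1+\<beta>*w) =
    (w - z) * (\<Sum>s<d. z^(d-1-s) * (1 + \<beta>*z - (if s = 0 then \<beta>*z else 0)) * w^s)"
proof -
  obtain e where de: "d = Suc e" using d gr0_implies_Suc by blast
  define Q where "Q = (\<Sum>s<d. z^(d - Suc s) * w^s)"
  have P: "(w - z) * Q = w^d - z^d" unfolding Q_def by (rule power_diff_sumr2[symmetric])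
  have "(\<Sum>s<d. z^(d-1-s) * (1 + \<beta>*z - (if s = 0 then \<beta>*z else 0)) * w^s)
     = (\<Sum>s<d. (1+\<beta>*z) * (z^(d - Suc s) * w^s) - (if s = 0 then \<beta>*z*z^e else 0))"
    by (intro sum.cong refl) (auto simp: de algebra_simps)
  also have "\<dots> = (1+\<beta>*z) * Q - \<beta>*z*z^e"
    unfolding Q_def by (simp add: sum_subtractf sum_distrib_left distrib_left de)
  finally have H: "(\<Sum>s<d. z^(d-1-s) * (1 + \<beta>*z - (if s = 0 then \<beta>*z else 0)) * w^s) = (1+\<beta>*z) * Q - \<beta>*z*z^e" .
  have "(w - z) * ((1+\<beta>*z) * Q - \<beta>*z*z^e) = (1+\<beta>*z) * ((w - z) * Q) - (w - z)*\<beta>*z*z^e"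
    by (simp add: algebra_simps)
  also have "\<dots> = (1+\<beta>*z)*w^d - z^d*(1+\<beta>*w)" unfolding P by (simp add: de algebra_simps)
  finally show ?thesis unfolding H by simp
qed

definition gmat :: "'a::field \<Rightarrow> nat list \<Rightarrow> 'a list \<Rightarrow> 'a mat" where
  "gmat \<beta> lam zs = mat (length zs) (length zs)
     (\<lambda>(j,k). (zs!j) ^ (lam!k + length zs - 1 - k) * (1 + \<beta> * zs!j) ^ k)"

definition vand :: "'a::field list \<Rightarrow> 'a" where
  "vand zs = (\<Prod>j<length zs. \<Prod>k\<in>{j<..<length zs}. (zs!j - zs!k))"

lemma groth_eq: "groth \<beta> lam zs = det (gmat \<beta> lam zs) / vand zs"
  unfolding groth_def gmat_def vand_def Let_def by (rule refl)

lemma Suc_ivl_image: "{Suc a<..<Suc b} = Suc ` {a<..<b}"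
  by (auto simp: image_iff) (metis Suc_lessE Suc_less_eq greaterThanLessThan_iff)

lemma ivl0_image: "{0<..<Suc n} = Suc ` {..<n}"
  by (auto simp: image_iff gr0_conv_Suc)

lemma vand_Cons: "vand (z#ws) = (\<Prod>k<length ws. z - ws!k) * vand ws"
proof -
  have 1: "vand (z#ws) = (\<Prod>j<Suc (length ws). \<Prod>k\<in>{j<..<Suc (length ws)}. ((z#ws)!j - (z#ws)!k))"
    by (simp only: vand_def length_Cons)
  have 2: "(\<Prod>j<Suc (length ws). \<Prod>k\<in>{j<..<Suc (length ws)}. ((z#ws)!j - (z#ws)!k)) = (\<Prod>k\<in>{0<..<Suc (length ws)}. ((z#ws)!0 - (z#ws)!k)) *
     (\<Prod>j<length ws. \<Prod>k\<in>{Suc j<..<Suc (length ws)}. ((z#ws)!(Suc j) - (z#ws)!k))"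
    by (rule prod.lessThan_Suc_shift)
  have 3: "(\<Prod>k\<in>{0<..<Suc (length ws)}. ((z#ws)!0 - (z#ws)!k)) = (\<Prod>k<length ws. z - ws!k)"
  proof -
    have e: "{0<..<Suc (length ws)} = Suc ` {..<length ws}" by (rule ivl0_image)
    show ?thesis unfolding e by (subst prod.reindex) auto
  qed
  have 4: "(\<Prod>j<length ws. \<Prod>k\<in>{Suc j<..<Suc (length ws)}. ((z#ws)!(Suc j) - (z#ws)!k)) = vand ws"
    unfolding vand_def
  proof (rule prod.cong[OF refl])
    fix j assume "j \<in> {..<length ws}"
    show "(\<Prod>k\<in>{Suc j<..<Suc (length ws)}. ((z#ws)!(Suc j) - (z#ws)!k)) = (\<Prod>k\<in>{j<..<length ws}. (ws!j - ws!k))"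
      unfolding Suc_ivl_image by (subst prod.reindex) auto
  qed
  show ?thesis by (rule trans[OF 1 trans[OF 2 arg_cong2[where f="(*)", OF 3 4]]])
qed




lemma branch_nondeg:
  fixes \<beta> z :: "'a::field" and ws :: "'a list" and lam :: "nat list"
  assumes len: "length lam = Suc (length ws)" and srt: "sorted_wrt (\<ge>) lam" and nd: "1 + \<beta>*z \<noteq> 0"
  shows "det (gmat \<beta> lam (z#ws)) = (\<Prod>k<length ws. z - ws!k) * (z^(lam!length ws) *
    (\<Sum>\<sigma>\<in>PiE {0..<length ws} (\<lambda>j. {..<lam!j - lam!Suc j + 1}).
       (\<Prod>j=0..<length ws. z^(lam!j - lam!Suc j - \<sigma> j) * (1 + \<beta>*z - (if \<sigma> j = 0 then \<beta>*z else 0))) *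
       det (gmat \<beta> (map (\<lambda>j. lam!Suc j + \<sigma> j) [0..<length ws]) ws)))"
proof -
  define m where "m = length ws"
  define M where "M = gmat \<beta> lam (z#ws)"
  define d where "d = (\<lambda>j. lam!j - lam!Suc j + 1)"
  define c where "c = (\<lambda>j s. z^(lam!j - lam!Suc j - s) * (1 + \<beta>*z - (if s = 0 then \<beta>*z else 0)))"
  define g where "g = (\<lambda>i j s. (ws!i)^(lam!Suc j + m - 1 - j + s) * (1 + \<beta>*ws!i)^j)"
  define T where "T = mat (Suc m) (Suc m) (\<lambda>(i,k). if i = k then (if k < m then 1+\<beta>*z else 1)
      else if i = Suc k then - (z^d k) else 0)"
  define A where "A = mat (Suc m) (Suc m) (\<lambda>(j,k). if k < m then (1+\<beta>*z)*M$$(j,k) - z^(d k)*M$$(j,Suc k) else M$$(j,k))"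
  have mono: "\<And>j. j < m \<Longrightarrow> lam!Suc j \<le> lam!j"
    using sorted_wrt_nth_less[OF srt, of _ "Suc _"] len unfolding m_def by auto
  have Mc: "M \<in> carrier_mat (Suc m) (Suc m)" unfolding M_def gmat_def m_def by simp
  have Tc: "T \<in> carrier_mat (Suc m) (Suc m)" unfolding T_def by simp
  have Mij: "\<And>i j. i < Suc m \<Longrightarrow> j < Suc m \<Longrightarrow> M$$(i,j) = ((z#ws)!i)^(lam!j + m - j) * (1 + \<beta>*(z#ws)!i)^j"
    unfolding M_def gmat_def m_def by simp
  have AMT: "A = M * T"
  proof (rule eq_matI)
    fix j k assume j: "j < dim_row (M * T)" and k: "k < dim_col (M * T)"
    hence j: "j < Suc m" and k: "k < Suc m" using Mc Tc by auto
    have "(M * T) $$ (j,k) = (\<Sum>i\<in>{0..<Suc m}. M$$(j,i) * T$$(i,k))"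
      using j k Mc Tc by (simp add: scalar_prod_def)
    also have "\<dots> = (\<Sum>i\<in>{0..<Suc m}. (if i = k then M$$(j,k) * (if k < m then 1+\<beta>*z else 1) else 0) +
         (if i = Suc k then - (z^d k) * M$$(j,Suc k) else 0))"
      using k by (intro sum.cong refl) (auto simp: T_def)
    also have "\<dots> = M$$(j,k) * (if k < m then 1+\<beta>*z else 1) + (if Suc k < Suc m then - (z^d k) * M$$(j,Suc k) else 0)"
      using k by (simp add: sum.distrib)
    also have "\<dots> = A $$ (j,k)" using j k by (simp add: A_def)
    finally show "A $$ (j,k) = (M * T) $$ (j,k)" by simp
  qed (insert Mc Tc, auto simp: A_def)
  have detT: "det T = (1+\<beta>*z)^m"
  proof -
    have "det T = prod_list (diag_mat T)"
      by (rule det_lower_triangular[OF _ Tc]) (auto simp: T_def)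
    also have "\<dots> = (\<Prod>i=0..<Suc m. T$$(i,i))" by (simp add: prod_list_diag_prod T_def)
    also have "\<dots> = (\<Prod>i=0..<m. (1+\<beta>*z))" by (simp add: T_def)
    finally show ?thesis by simp
  qed
  have detA: "det A = det M * (1+\<beta>*z)^m"
    unfolding AMT det_mult[OF Mc Tc] detT ..
  have Ac: "A \<in> carrier_mat (Suc m) (Suc m)" unfolding A_def by simp
  have row0: "\<And>k. k < m \<Longrightarrow> A$$(0,k) = 0"
  proof -
    fix k assume k: "k < m"
    have e: "lam!k + m - k = d k + (lam!Suc k + m - Suc k)" using mono[OF k] k unfolding d_def by simp
    have "A$$(0,k) = (1+\<beta>*z)*M$$(0,k) - z^(d k)*M$$(0,Suc k)" using k by (simp add: A_def)
    also have "\<dots> = (1+\<beta>*z)*(z^(lam!k+m-k)*(1+\<beta>*z)^k) - z^(d k) * (z^(lam!Suc k + m - Suc k) * (1+\<beta>*z)^Suc k)"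
      using k by (simp add: Mij)
    also have "\<dots> = 0" unfolding e power_add by (simp add: algebra_simps)
    finally show "A$$(0,k) = 0" .
  qed
  have Am: "A$$(0,m) = z^(lam!m) * (1+\<beta>*z)^m" unfolding A_def by (simp add: Mij)
  have "det A = (\<Sum>j<Suc m. A $$ (0,j) * cofactor A 0 j)"
    by (rule laplace_expansion_row[OF Ac]) simp
  also have "\<dots> = A$$(0,m) * cofactor A 0 m" by (simp add: row0)
  finally have detA2: "det A = z^(lam!m) * (1+\<beta>*z)^m * ((-1)^m * det (mat_delete A 0 m))"
    unfolding Am cofactor_def by simp
  have del: "mat_delete A 0 m = mat m m (\<lambda>(i,j). (ws!i - z) * (\<Sum>s\<in>{..<d j}. c j s * g i j s))"
  proof (rule eq_matI)
    fix i j assume "i < dim_row (mat m m (\<lambda>(i,j). (ws!i - z) * (\<Sum>s\<in>{..<d j}. c j s * g i j s)))"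
      "j < dim_col (mat m m (\<lambda>(i,j). (ws!i - z) * (\<Sum>s\<in>{..<d j}. c j s * g i j s)))"
    hence i: "i < m" and j: "j < m" by auto
    define w where "w = ws!i"
    define e where "e = lam!Suc j + m - 1 - j"
    have e1: "lam!j + m - j = e + d j" using mono[OF j] j unfolding d_def e_def by simp
    have e2: "lam!Suc j + m - Suc j = e" unfolding e_def by simp
    have dpos: "d j > 0" unfolding d_def by simp
    have "mat_delete A 0 m $$ (i,j) = A $$ (Suc i, j)" using i j Ac unfolding mat_delete_def by simp
    also have "\<dots> = (1+\<beta>*z) * (w^(e + d j) * (1+\<beta>*w)^j) - z^(d j) * (w^e * (1+\<beta>*w)^Suc j)"
      using i j unfolding A_def by (simp add: Mij e1 e2 w_def)
    also have "\<dots> = w^e * (1+\<beta>*w)^j * ((1+\<beta>*z)*w^(d j) - z^(d j)*(1+\<beta>*w))"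
      by (simp add: power_add algebra_simps)
    also have "\<dots> = w^e * (1+\<beta>*w)^j * ((w - z) * (\<Sum>s<d j. z^(d j-1-s) * (1 + \<beta>*z - (if s = 0 then \<beta>*z else 0)) * w^s))"
      by (simp only: key_identity[OF dpos])
    also have "\<dots> = (w - z) * (\<Sum>s\<in>{..<d j}. c j s * g i j s)"
      unfolding sum_distrib_left
      by (intro sum.cong refl) (simp add: c_def g_def d_def e_def w_def power_add algebra_simps)
    finally show "mat_delete A 0 m $$ (i,j) = mat m m (\<lambda>(i,j). (ws!i - z) * (\<Sum>s\<in>{..<d j}. c j s * g i j s)) $$ (i,j)"
      using i j by (simp add: w_def)
  qed (insert Ac, auto)
  have detdel: "det (mat_delete A 0 m) = (\<Prod>i=0..<m. ws!i - z) *
     (\<Sum>\<sigma>\<in>PiE {0..<m} (\<lambda>j. {..<d j}). (\<Prod>j=0..<m. c j (\<sigma> j)) * det (mat m m (\<lambda>(i,j). g i j (\<sigma> j))))"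
    unfolding del by (rule det_multilin) simp
  have gm: "\<And>\<sigma>. mat m m (\<lambda>(i,j). g i j (\<sigma> j)) = gmat \<beta> (map (\<lambda>j. lam!Suc j + \<sigma> j) [0..<m]) ws"
    unfolding gmat_def g_def m_def by (rule eq_matI) (auto simp: ac_simps)
  have sgn: "(-1)^m * (\<Prod>i=0..<m. ws!i - z) = (\<Prod>k<m. z - ws!k)"
  proof -
    have "(\<Prod>k<m. z - ws!k) = (\<Prod>k<m. (-1) * (ws!k - z))" by (intro prod.cong) auto
    also have "\<dots> = (-1)^m * (\<Prod>k<m. ws!k - z)" unfolding prod.distrib by simp
    finally show ?thesis by (simp add: atLeast0LessThan)
  qed
  have "det M * (1+\<beta>*z)^m = (1+\<beta>*z)^m * ((\<Prod>k<m. z - ws!k) * (z^(lam!m) *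
    (\<Sum>\<sigma>\<in>PiE {0..<m} (\<lambda>j. {..<d j}). (\<Prod>j=0..<m. c j (\<sigma> j)) * det (gmat \<beta> (map (\<lambda>j. lam!Suc j + \<sigma> j) [0..<m]) ws))))"
    unfolding detA[symmetric] detA2 detdel gm sgn[symmetric] by (simp add: ac_simps)
  hence "det M = (\<Prod>k<m. z - ws!k) * (z^(lam!m) *
    (\<Sum>\<sigma>\<in>PiE {0..<m} (\<lambda>j. {..<d j}). (\<Prod>j=0..<m. c j (\<sigma> j)) * det (gmat \<beta> (map (\<lambda>j. lam!Suc j + \<sigma> j) [0..<m]) ws)))"
    using nd by (simp add: mult.commute)
  thus ?thesis unfolding M_def m_def d_def c_def .
qed




lemma srt_le:
  fixes l :: "nat list"
  assumes "sorted_wrt (\<ge>) l" "i \<le> j" "j < length l" shows "l!j \<le> l!i"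
  using sorted_wrt_nth_less[of "(\<ge>)" l i j] assms by (cases "i = j") auto

lemma finite_bp: "finite (bounded_partitions N b)"
proof -
  have "bounded_partitions N b \<subseteq> {xs. set xs \<subseteq> {0..b} \<and> length xs = N}"
    unfolding bounded_partitions_def is_partition_def by auto
  thus ?thesis by (rule finite_subset) (rule finite_lists_length_eq, simp)
qed

lemma sigma_to_mu:
  fixes \<beta> z :: "'a::field" and F :: "nat list \<Rightarrow> 'a" and lam :: "nat list"
  assumes len: "length lam = Suc m" and srt: "sorted_wrt (\<ge>) lam"
  shows "z^(lam!m) * (\<Sum>\<sigma>\<in>PiE {0..<m} (\<lambda>j. {..<lam!j - lam!Suc j + 1}).
       (\<Prod>j=0..<m. z^(lam!j - lam!Suc j - \<sigma> j) * (1 + \<beta>*z - (if \<sigma> j = 0 then \<beta>*z else 0))) *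
       F (map (\<lambda>j. lam!Suc j + \<sigma> j) [0..<m]))
    = (\<Sum>\<mu>\<in>bounded_partitions m (sum_list lam). skew1 \<beta> lam \<mu> z * F \<mu>)"
proof -
  let ?S = "PiE {0..<m} (\<lambda>j. {..<lam!j - lam!Suc j + 1})"
  let ?I = "{\<mu>\<in>bounded_partitions m (sum_list lam). interlaces lam \<mu>}"
  let ?j = "\<lambda>\<sigma>. map (\<lambda>j. lam!Suc j + \<sigma> j) [0..<m]"
  let ?i = "\<lambda>\<mu>. restrict (\<lambda>j. \<mu>!j - lam!Suc j) {0..<m}"
  have mono: "\<And>i j. i \<le> j \<Longrightarrow> j \<le> m \<Longrightarrow> lam!j \<le> lam!i"
    using srt_le[OF srt] len by auto
  have "(\<Sum>\<mu>\<in>bounded_partitions m (sum_list lam). skew1 \<beta> lam \<mu> z * F \<mu>) =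
      (\<Sum>\<mu>\<in>?I. skew1 \<beta> lam \<mu> z * F \<mu>)"
    by (rule sum.mono_neutral_right) (auto simp: finite_bp skew1_def)
  also have "\<dots> = (\<Sum>\<sigma>\<in>?S. z^(lam!m) * ((\<Prod>j=0..<m. z^(lam!j - lam!Suc j - \<sigma> j) * (1 + \<beta>*z - (if \<sigma> j = 0 then \<beta>*z else 0))) *
       F (?j \<sigma>)))"
  proof (rule sum.reindex_bij_witness[where i="?i" and j="?j", symmetric])
    fix \<sigma> assume s: "\<sigma> \<in> ?S"
    hence sb: "\<And>j. j < m \<Longrightarrow> \<sigma> j \<le> lam!j - lam!Suc j" and sext: "\<And>j. j \<notin> {0..<m} \<Longrightarrow> \<sigma> j = undefined"
      by (auto simp: PiE_def Pi_def extensional_def less_Suc_eq_le)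
    show "?i (?j \<sigma>) = \<sigma>"
      by (rule ext) (auto simp: sext)
    have lenj: "length (?j \<sigma>) = m" by simp
    have le: "\<And>j. j < m \<Longrightarrow> lam!Suc j \<le> lam!j" using mono by simp
    have sb2: "\<And>j. j < m \<Longrightarrow> lam!Suc j + \<sigma> j \<le> lam!j" proof -
      fix j assume "j < m" thus "lam!Suc j + \<sigma> j \<le> lam!j" using sb[of j] le[of j] by linarith
    qed
    have inter: "interlaces lam (?j \<sigma>)"
      unfolding interlaces_def using len sb2 by auto
    have srtj: "sorted_wrt (\<ge>) (?j \<sigma>)"
    proof (unfold sorted_wrt_iff_nth_less, intro allI impI)
      fix a b assume ab: "a < b" "b < length (?j \<sigma>)"
      hence b: "b < m" by simp
      have "lam!Suc b + \<sigma> b \<le> lam!b" using sb[OF b] le[OF b] by linarith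
      also have "lam!b \<le> lam!Suc a" using mono[of "Suc a" b] ab b by simp
      also have "\<dots> \<le> lam!Suc a + \<sigma> a" by simp
      finally show "(?j \<sigma>)!b \<le> (?j \<sigma>)!a" using ab by simp
    qed
    have bnd: "\<forall>x\<in>set (?j \<sigma>). x \<le> sum_list lam"
    proof
      fix x assume "x \<in> set (?j \<sigma>)"
      then obtain j where j: "j < m" and x: "x = lam!Suc j + \<sigma> j" by auto
      have "x \<le> lam!j" using x sb[OF j] le[OF j] by linarith
      also have "\<dots> \<le> sum_list lam" by (rule elem_le_sum_list) (use j len in simp)
      finally show "x \<le> sum_list lam" .
    qed
    show "?j \<sigma> \<in> ?I" using lenj srtj bnd inter
      by (simp add: bounded_partitions_def is_partition_def)
    show "skew1 \<beta> lam (?j \<sigma>) z * F (?j \<sigma>) = z^(lam!m) * ((\<Prod>j=0..<m. z^(lam!j - lam!Suc j - \<sigma> j) * (1 + \<beta>*z - (if \<sigma> j = 0 then \<beta>*z else 0))) *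
       F (?j \<sigma>))"
    proof -
      have sl: "sum_list lam = (\<Sum>j<m. lam!j) + lam!m"
        by (simp add: sum_list_sum_nth len atLeast0LessThan)
      have sj: "sum_list (?j \<sigma>) = (\<Sum>j<m. lam!Suc j + \<sigma> j)"
        by (simp add: sum_list_sum_nth atLeast0LessThan)
      have "(\<Sum>j<m. lam!j) = (\<Sum>j<m. (lam!j - lam!Suc j - \<sigma> j) + (lam!Suc j + \<sigma> j))"
        apply (rule sum.cong[OF refl])
        subgoal for x using sb2[of x] by simp
        done
      hence "sum_list lam - sum_list (?j \<sigma>) = lam!m + (\<Sum>j<m. lam!j - lam!Suc j - \<sigma> j)"
        unfolding sl sj sum.distrib by simp
      hence zp: "z^(sum_list lam - sum_list (?j \<sigma>)) = z^(lam!m) * (\<Prod>j=0..<m. z^(lam!j - lam!Suc j - \<sigma> j))"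
        by (simp add: power_add power_sum atLeast0LessThan)
      have pr: "(\<Prod>j<length (?j \<sigma>). 1 + \<beta>*z - (if lam!(j+1) = (?j \<sigma>)!j then \<beta>*z else 0)) =
          (\<Prod>j=0..<m. 1 + \<beta>*z - (if \<sigma> j = 0 then \<beta>*z else 0))"
        by (simp add: atLeast0LessThan)
      show ?thesis unfolding skew1_def using inter
        by (simp only: if_True zp pr) (simp add: prod.distrib ac_simps)
    qed
  next
    fix \<mu> assume mu: "\<mu> \<in> ?I"
    hence lm: "length \<mu> = m" and il: "\<And>j. j < m \<Longrightarrow> lam!Suc j \<le> \<mu>!j \<and> \<mu>!j \<le> lam!j"
      by (auto simp: bounded_partitions_def is_partition_def interlaces_def)
    show "?j (?i \<mu>) = \<mu>"
      by (rule nth_equalityI) (auto simp: lm il)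
    show "?i \<mu> \<in> ?S"
      using il by (auto simp: PiE_def Pi_def extensional_def less_Suc_eq_le diff_le_mono)
  qed
  also have "\<dots> = z^(lam!m) * (\<Sum>\<sigma>\<in>?S. (\<Prod>j=0..<m. z^(lam!j - lam!Suc j - \<sigma> j) * (1 + \<beta>*z - (if \<sigma> j = 0 then \<beta>*z else 0))) *
       F (?j \<sigma>))"
    by (simp only: sum_distrib_left)
  finally show ?thesis by simp
qed




lemma branch_deg:
  fixes \<beta> z :: "'a::field" and ws :: "'a list" and lam :: "nat list"
  assumes len: "length lam = Suc (length ws)" and dg: "1 + \<beta>*z = 0"
  shows "det (gmat \<beta> lam (z#ws)) = (\<Prod>k<length ws. z - ws!k) * (z^(lam!0) * det (gmat \<beta> (tl lam) ws))"
proof -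
  define m where "m = length ws"
  define M where "M = gmat \<beta> lam (z#ws)"
  have Mc: "M \<in> carrier_mat (Suc m) (Suc m)" unfolding M_def gmat_def m_def by simp
  have Mij: "\<And>i j. i < Suc m \<Longrightarrow> j < Suc m \<Longrightarrow> M$$(i,j) = ((z#ws)!i)^(lam!j + m - j) * (1 + \<beta>*(z#ws)!i)^j"
    unfolding M_def gmat_def m_def by simp
  have "det M = (\<Sum>j<Suc m. M $$ (0,j) * cofactor M 0 j)"
    by (rule laplace_expansion_row[OF Mc]) simp
  also have "\<dots> = M $$ (0,0) * cofactor M 0 0 + (\<Sum>j<m. M $$ (0,Suc j) * cofactor M 0 (Suc j))"
    by (rule sum.lessThan_Suc_shift)
  also have "(\<Sum>j<m. M $$ (0,Suc j) * cofactor M 0 (Suc j)) = 0"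
    by (rule sum.neutral) (simp add: Mij dg)
  finally have d1: "det M = z^(lam!0 + m) * det (mat_delete M 0 0)"
    by (simp add: Mij cofactor_def)
  have del: "mat_delete M 0 0 = mat m m (\<lambda>(i,j). (1 + \<beta>*ws!i) * ((ws!i)^(tl lam!j + m - 1 - j) * (1 + \<beta>*ws!i)^j))"
  proof (rule eq_matI)
    fix i j assume "i < dim_row (mat m m (\<lambda>(i,j). (1 + \<beta>*ws!i) * ((ws!i)^(tl lam!j + m - 1 - j) * (1 + \<beta>*ws!i)^j)))"
      "j < dim_col (mat m m (\<lambda>(i,j). (1 + \<beta>*ws!i) * ((ws!i)^(tl lam!j + m - 1 - j) * (1 + \<beta>*ws!i)^j)))"
    hence i: "i < m" and j: "j < m" by auto
    have e: "lam!Suc j + m - Suc j = tl lam!j + m - 1 - j" using len j by (simp add: nth_tl m_def)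
    have "mat_delete M 0 0 $$ (i,j) = M $$ (Suc i, Suc j)" using i j Mc unfolding mat_delete_def by simp
    also have "\<dots> = (ws!i)^(lam!Suc j + m - Suc j) * (1 + \<beta>*ws!i)^Suc j" using i j by (simp only: Mij) simp
    also have "\<dots> = (1 + \<beta>*ws!i) * ((ws!i)^(tl lam!j + m - 1 - j) * (1 + \<beta>*ws!i)^j)"
      unfolding e by simp
    finally show "mat_delete M 0 0 $$ (i,j) = mat m m (\<lambda>(i,j). (1 + \<beta>*ws!i) * ((ws!i)^(tl lam!j + m - 1 - j) * (1 + \<beta>*ws!i)^j)) $$ (i,j)"
      using i j by simp
  qed (insert Mc, auto)
  have d2: "det (mat_delete M 0 0) = (\<Prod>i=0..<m. 1 + \<beta>*ws!i) * det (gmat \<beta> (tl lam) ws)"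
    unfolding del det_rowscale unfolding gmat_def m_def by simp
  have zprod: "z^m * (\<Prod>i=0..<m. 1 + \<beta>*ws!i) = (\<Prod>k<m. z - ws!k)"
  proof -
    have "z^m * (\<Prod>i=0..<m. 1 + \<beta>*ws!i) = (\<Prod>i<m. z * (1 + \<beta>*ws!i))"
      by (simp add: prod.distrib atLeast0LessThan)
    also have "\<dots> = (\<Prod>k<m. z - ws!k)"
    proof (rule prod.cong[OF refl])
      fix k have "z * (1 + \<beta>*ws!k) = z + (1 + \<beta>*z - 1) * ws!k" by (simp add: algebra_simps)
      thus "z * (1 + \<beta>*ws!k) = z - ws!k" using dg by simp
    qed
    finally show ?thesis .
  qed
  show ?thesis unfolding M_def[symmetric] m_def[symmetric] d1 d2 zprod[symmetric]
    by (simp add: power_add ac_simps)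
qed

lemma skew_deg:
  fixes \<beta> z :: "'a::field" and F :: "nat list \<Rightarrow> 'a" and lam :: "nat list"
  assumes len: "length lam = Suc m" and srt: "sorted_wrt (\<ge>) lam" and dg: "1 + \<beta>*z = 0"
  shows "(\<Sum>\<mu>\<in>bounded_partitions m (sum_list lam). skew1 \<beta> lam \<mu> z * F \<mu>) = z^(lam!0) * F (tl lam)"
proof -
  obtain a l where lam: "lam = a # l" using len by (cases lam) auto
  have ll: "length l = m" using len lam by simp
  have tlin: "tl lam \<in> bounded_partitions m (sum_list lam)"
    using srt ll unfolding lam bounded_partitions_def is_partition_def
    by (auto intro: member_le_sum_list order_trans[OF member_le_sum_list])
  have H1: "(\<Sum>\<mu>\<in>bounded_partitions m (sum_list lam). skew1 \<beta> lam \<mu> z * F \<mu>) =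
     (\<Sum>\<mu>\<in>{tl lam}. skew1 \<beta> lam \<mu> z * F \<mu>)"
  proof (rule sum.mono_neutral_right[OF finite_bp])
    show "{tl lam} \<subseteq> bounded_partitions m (sum_list lam)" using tlin by simp
    show "\<forall>\<mu>\<in>bounded_partitions m (sum_list lam) - {tl lam}. skew1 \<beta> lam \<mu> z * F \<mu> = 0"
    proof
      fix \<mu> assume mu: "\<mu> \<in> bounded_partitions m (sum_list lam) - {tl lam}"
      hence lm: "length \<mu> = m" and ne: "\<mu> \<noteq> l"
        using lam by (auto simp: bounded_partitions_def is_partition_def)
      obtain j where j: "j < m" and nj: "\<mu>!j \<noteq> l!j"
        using ne lm ll nth_equalityI by metis
      have "(\<Prod>j<length \<mu>. 1 + \<beta>*z - (if lam!(j+1) = \<mu>!j then \<beta>*z else 0)) = 0"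
        using j nj lm dg lam by (intro prod_zero) (auto intro!: bexI[of _ j])
      thus "skew1 \<beta> lam \<mu> z * F \<mu> = 0" unfolding skew1_def by simp
    qed
  qed
  have H2: "skew1 \<beta> lam (tl lam) z = z^(lam!0)"
  proof -
    have le: "\<And>j. j < m \<Longrightarrow> lam!Suc j \<le> lam!j"
    proof -
      fix j assume "j < m" thus "lam!Suc j \<le> lam!j" using srt_le[OF srt, of j "Suc j"] len by simp
    qed
    have inter: "interlaces lam (tl lam)"
      unfolding interlaces_def using le len ll by (auto simp: lam)
    have "(\<Prod>j<length (tl lam). 1 + \<beta>*z - (if lam!(j+1) = (tl lam)!j then \<beta>*z else 0)) = 1"
      unfolding lam by simp
    thus ?thesis unfolding skew1_def using inter lam by simp
  qed
  show ?thesis using H1 H2 by simp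
qed

lemma vand_nz: "distinct ws \<Longrightarrow> vand ws \<noteq> 0"
  unfolding vand_def by (auto simp: nth_eq_iff_index_eq)

lemma branch1:
  fixes \<beta> z :: "'a::field" and ws :: "'a list" and lam :: "nat list"
  assumes part: "is_partition (Suc (length ws)) lam" and dist: "distinct (z#ws)"
  shows "groth \<beta> lam (z#ws) = (\<Sum>\<mu>\<in>bounded_partitions (length ws) (sum_list lam). skew1 \<beta> lam \<mu> z * groth \<beta> \<mu> ws)"
proof -
  have len: "length lam = Suc (length ws)" and srt: "sorted_wrt (\<ge>) lam"
    using part by (auto simp: is_partition_def)
  let ?P = "\<Prod>k<length ws. z - ws!k"
  have Pnz: "?P \<noteq> 0" using dist by (auto simp: nth_mem)
  have Vnz: "vand ws \<noteq> 0" using dist by (simp add: vand_nz)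
  have key: "det (gmat \<beta> lam (z#ws)) = ?P * (\<Sum>\<mu>\<in>bounded_partitions (length ws) (sum_list lam). skew1 \<beta> lam \<mu> z * det (gmat \<beta> \<mu> ws))"
  proof (cases "1 + \<beta>*z = 0")
    case True
    show ?thesis unfolding branch_deg[OF len True] skew_deg[where F="\<lambda>\<mu>. det (gmat \<beta> \<mu> ws)", OF len srt True] ..
  next
    case False
    show ?thesis unfolding branch_nondeg[OF len srt False] sigma_to_mu[where F="\<lambda>\<mu>. det (gmat \<beta> \<mu> ws)", OF len srt] ..
  qed
  have "groth \<beta> lam (z#ws) = ?P * (\<Sum>\<mu>\<in>bounded_partitions (length ws) (sum_list lam). skew1 \<beta> lam \<mu> z * det (gmat \<beta> \<mu> ws)) / (?P * vand ws)"
    unfolding groth_eq key vand_Cons ..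
  also have "\<dots> = (\<Sum>\<mu>\<in>bounded_partitions (length ws) (sum_list lam). skew1 \<beta> lam \<mu> z * det (gmat \<beta> \<mu> ws)) / vand ws"
    using Pnz by simp
  also have "\<dots> = (\<Sum>\<mu>\<in>bounded_partitions (length ws) (sum_list lam). skew1 \<beta> lam \<mu> z * groth \<beta> \<mu> ws)"
    unfolding sum_divide_distrib groth_eq by simp
  finally show ?thesis .
qed




lemma interlace_sum: "interlaces mu lam \<Longrightarrow> sum_list lam \<le> sum_list (mu::nat list)"
proof -
  assume I: "interlaces mu lam"
  hence len: "length mu = Suc (length lam)" and le: "\<And>j. j < length lam \<Longrightarrow> lam!j \<le> mu!j"
    by (auto simp: interlaces_def)
  have "sum_list lam = (\<Sum>j<length lam. lam!j)" by (simp add: sum_list_sum_nth atLeast0LessThan)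
  also have "\<dots> \<le> (\<Sum>j<length lam. mu!j)" by (rule sum_mono) (simp add: le)
  also have "\<dots> \<le> (\<Sum>j<Suc (length lam). mu!j)" by simp
  also have "\<dots> = sum_list mu" by (simp add: sum_list_sum_nth atLeast0LessThan len)
  finally show ?thesis .
qed

lemma skewG_sum: "skewG \<beta> kap nu zs \<noteq> 0 \<Longrightarrow> sum_list nu \<le> sum_list kap"
proof (induction zs arbitrary: kap)
  case Nil thus ?case by (simp split: if_splits)
next
  case (Cons z zs)
  from Cons.prems obtain k where "skew1 \<beta> kap k z * skewG \<beta> k nu zs \<noteq> 0"
    by (auto elim: sum.not_neutral_contains_not_neutral)
  hence "interlaces kap k" and "skewG \<beta> k nu zs \<noteq> 0" by (auto simp: skew1_def split: if_splits)
  thus ?case using Cons.IH interlace_sum by (meson order_trans)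
qed

theorem mainTheorem3:
  fixes \<beta> :: "'a::field_char_0" and zs ws :: "'a list" and lam :: "nat list"
  assumes "is_partition (length zs + length ws) lam"
    and "distinct (zs @ ws)"
  shows "groth \<beta> lam (zs @ ws) =
    (\<Sum>nu \<in> bounded_partitions (length ws) (sum_list lam).
        skewG \<beta> lam nu zs * groth \<beta> nu ws)"
  using assms
proof (induction zs arbitrary: lam)
  case Nil
  have lin: "lam \<in> bounded_partitions (length ws) (sum_list lam)"
    using Nil.prems by (auto simp: bounded_partitions_def member_le_sum_list)
  have "(\<Sum>nu \<in> bounded_partitions (length ws) (sum_list lam). skewG \<beta> lam nu [] * groth \<beta> nu ws)
     = (\<Sum>nu \<in> bounded_partitions (length ws) (sum_list lam). if lam = nu then groth \<beta> nu ws else 0)"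
    by (intro sum.cong refl) simp
  also have "\<dots> = groth \<beta> lam ws" using lin by (simp add: finite_bp)
  finally show ?case by simp
next
  case (Cons z zs)
  let ?B = "bounded_partitions (length ws) (sum_list lam)"
  let ?K = "bounded_partitions (length (zs @ ws)) (sum_list lam)"
  have part: "is_partition (Suc (length (zs @ ws))) lam" and dist: "distinct (z # (zs @ ws))"
    using Cons.prems by auto
  have "groth \<beta> lam ((z#zs) @ ws) = (\<Sum>k\<in>?K. skew1 \<beta> lam k z * groth \<beta> k (zs @ ws))"
    using branch1[OF part dist] by simp
  also have "\<dots> = (\<Sum>k\<in>?K. skew1 \<beta> lam k z * (\<Sum>nu\<in>?B. skewG \<beta> k nu zs * groth \<beta> nu ws))"
  proof (rule sum.cong[OF refl])
    fix k assume k: "k \<in> ?K"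
    show "skew1 \<beta> lam k z * groth \<beta> k (zs @ ws) = skew1 \<beta> lam k z * (\<Sum>nu\<in>?B. skewG \<beta> k nu zs * groth \<beta> nu ws)"
    proof (cases "interlaces lam k")
      case False thus ?thesis by (simp add: skew1_def)
    next
      case True
      have kp: "is_partition (length zs + length ws) k" using k by (simp add: bounded_partitions_def)
      have dzw: "distinct (zs @ ws)" using dist by simp
      have IH: "groth \<beta> k (zs @ ws) = (\<Sum>nu\<in>bounded_partitions (length ws) (sum_list k). skewG \<beta> k nu zs * groth \<beta> nu ws)"
        by (rule Cons.IH[OF kp dzw])
      have sk: "sum_list k \<le> sum_list lam" using interlace_sum[OF True] .
      have "(\<Sum>nu\<in>bounded_partitions (length ws) (sum_list k). skewG \<beta> k nu zs * groth \<beta> nu ws)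
          = (\<Sum>nu\<in>?B. skewG \<beta> k nu zs * groth \<beta> nu ws)"
      proof (rule sum.mono_neutral_left[OF finite_bp])
        show "bounded_partitions (length ws) (sum_list k) \<subseteq> ?B"
          using sk by (auto simp: bounded_partitions_def)
        show "\<forall>nu\<in>?B - bounded_partitions (length ws) (sum_list k). skewG \<beta> k nu zs * groth \<beta> nu ws = 0"
        proof
          fix nu assume nu: "nu \<in> ?B - bounded_partitions (length ws) (sum_list k)"
          then obtain x where x: "x \<in> set nu" "x > sum_list k"
            by (auto simp: bounded_partitions_def not_le)
          have "sum_list nu > sum_list k" using member_le_sum_list[OF x(1)] x(2) by linarith
          hence "skewG \<beta> k nu zs = 0" using skewG_sum by (meson not_le)
          thus "skewG \<beta> k nu zs * groth \<beta> nu ws = 0" by simp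
        qed
      qed
      thus ?thesis using IH by simp
    qed
  qed
  also have "\<dots> = (\<Sum>k\<in>?K. \<Sum>nu\<in>?B. skew1 \<beta> lam k z * skewG \<beta> k nu zs * groth \<beta> nu ws)"
    by (simp add: sum_distrib_left mult.assoc)
  also have "\<dots> = (\<Sum>nu\<in>?B. \<Sum>k\<in>?K. skew1 \<beta> lam k z * skewG \<beta> k nu zs * groth \<beta> nu ws)"
    by (rule sum.swap)
  also have "\<dots> = (\<Sum>nu\<in>?B. (\<Sum>k\<in>?K. skew1 \<beta> lam k z * skewG \<beta> k nu zs) * groth \<beta> nu ws)"
    by (simp add: sum_distrib_right)
  also have "\<dots> = (\<Sum>nu\<in>?B. skewG \<beta> lam nu (z#zs) * groth \<beta> nu ws)"
  proof -
    have "length lam - 1 = length (zs @ ws)" using part by (simp add: is_partition_def)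
    thus ?thesis by simp
  qed
  finally show ?case .
qed


end
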